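(* Let $m\ge1$ and, for $\mathfrak{g}\in\{\mathfrak{h},\mathfrak{r},\mathfrak{d}\}$, let $\mathcal{G}(q)=\max\{\mathfrak{g}(\tau):\tau\in T,\ \rho(\tau)\le q\}$. Then for $q\in\{\frac12,1,\frac32,2,\dots\}$: $\mathcal{G}(q)=2q$ for $\mathfrak{g}=\mathfrak{h}$ (simple iterations); $\mathcal{G}(q)=\lfloor q+\frac12\rfloor$ for $\mathfrak{g}=\mathfrak{r}$ (modified Newton iterations); $\mathcal{G}(q)=\lfloor\log_2(q+\frac12)\rfloor+1$ for $\mathfrak{g}=\mathfrak{d}$ (full Newton iterations). Moreover $\mathcal{G}(q)=\max\{\mathfrak{g}'(u):u\in U_f,\ \rho(u)\le q\}$.
   Context: $T$ is the set of $(m+1)$-colored rooted trees: the empty tree $\emptyset$ and all $\tau=[\tau_1,\dots,\tau_\kappa]_l$ with $l\in\{0,\dots,m\}$, $\kappa\ge0$, $\tau_1,\dots,\tau_\kappa\in T\setminus\{\emptyset\}$ (unordered), formed by joining the roots of the $\tau_j$ by edges to a new root of color $l$ ($\bullet_l$ when $\kappa=0$). Order: $\rho(\emptyset)=0$, $\rho([\tau_1,\dots,\tau_\kappa]_l)=\sum_j\rho(\tau_j)+1$ if $l=0$, and $=\sum_j\rho(\tau_j)+\frac12$ if $l\ge1$. $U_f$ is the set of trees $u=[\tau_1,\dots,\tau_\kappa]_f$, $\kappa\ge0$, $\tau_j\in T\setminus\{\emptyset\}$, with $\rho(u)=\sum_j\rho(\tau_j)$ and $\mathfrak{g}'(u)=\max_j\mathfrak{g}(\tau_j)$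 ($0$ if $\kappa=0$). Maxima over empty sets are $0$. $\mathfrak{h}(\emptyset)=0$, $\mathfrak{h}(\bullet_l)=1$, $\mathfrak{h}([\tau_1,\dots,\tau_\kappa]_l)=1+\max_j\mathfrak{h}(\tau_j)$; $\mathfrak{r}(\emptyset)=0$, $\mathfrak{r}(\bullet_l)=1$, $\mathfrak{r}([\tau_1]_l)=\mathfrak{r}(\tau_1)$, $\mathfrak{r}([\tau_1,\dots,\tau_\kappa]_l)=1+\max_j\mathfrak{r}(\tau_j)$ for $\kappa\ge2$; $\mathfrak{d}(\emptyset)=0$, $\mathfrak{d}(\bullet_l)=1$, $\mathfrak{d}([\tau_1,\dots,\tau_\kappa]_l)=M$ if exactly one $i$ has $\mathfrak{d}(\tau_i)=M:=\max_j\mathfrak{d}(\tau_j)$, and $M+1$ if at least two indices attain $M$. *)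

theory Defs
  imports Complex_Main
begin

text \<open>(m+1)-colored rooted trees. Children are stored as a list; all notions below
  are invariant under permuting children, so this represents unordered trees.\<close>
datatype ctree = Empty | Nd nat "ctree list"

fun wf :: "nat \<Rightarrow> ctree \<Rightarrow> bool" where
  "wf m Empty = True"
| "wf m (Nd l ts) = (l \<le> m \<and> (\<forall>t\<in>set ts. t \<noteq> Empty \<and> wf m t))"

fun rho :: "ctree \<Rightarrow> real" where
  "rho Empty = 0"
| "rho (Nd l ts) = sum_list (map rho ts) + (if l = 0 then 1 else 1/2)"

fun hgt :: "ctree \<Rightarrow> nat" where
  "hgt Empty = 0"
| "hgt (Nd l ts) = 1 + Max (insert 0 (set (map hgt ts)))"

fun rr :: "ctree \<Rightarrow> nat" where
  "rr Empty = 0"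
| "rr (Nd l []) = 1"
| "rr (Nd l [t]) = rr t"
| "rr (Nd l ts) = 1 + Max (insert 0 (set (map rr ts)))"

fun dd :: "ctree \<Rightarrow> nat" where
  "dd Empty = 0"
| "dd (Nd l []) = 1"
| "dd (Nd l ts) =
     (if 2 \<le> length (filter (\<lambda>x. x = Max (set (map dd ts))) (map dd ts))
      then Max (set (map dd ts)) + 1 else Max (set (map dd ts)))"

definition Gmax :: "(ctree \<Rightarrow> nat) \<Rightarrow> nat \<Rightarrow> real \<Rightarrow> nat" where
  "Gmax g m q = Max {g t | t. wf m t \<and> rho t \<le> q}"

text \<open>Trees u = [\<tau>_1,...,\<tau>_\<kappa>]_f in U_f, represented by their list of subtrees.\<close>
definition inU :: "nat \<Rightarrow> ctree list \<Rightarrow> bool" where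
  "inU m ts = (\<forall>t\<in>set ts. t \<noteq> Empty \<and> wf m t)"

definition rhoU :: "ctree list \<Rightarrow> real" where
  "rhoU ts = sum_list (map rho ts)"

definition gprime :: "(ctree \<Rightarrow> nat) \<Rightarrow> ctree list \<Rightarrow> nat" where
  "gprime g ts = Max (insert 0 (set (map g ts)))"

definition GmaxU :: "(ctree \<Rightarrow> nat) \<Rightarrow> nat \<Rightarrow> real \<Rightarrow> nat" where
  "GmaxU g m q = Max {gprime g ts | ts. inU m ts \<and> rhoU ts \<le> q}"

end

theory Submission
  imports Defs
begin

lemma rho_nonneg: "rho t \<ge> 0"
proof (induction t)
  case Empty then show ?case by simp
next
  case (Nd l ts)
  have "sum_list (map rho ts) \<ge> 0" using Nd by (intro sum_list_nonneg) auto
  then show ?case by simp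
qed

lemma rho_pos: "t \<noteq> Empty \<Longrightarrow> rho t \<ge> 1/2"
  using rho_nonneg[of t]
  by (cases t) (auto intro!: add_nonneg_nonneg sum_list_nonneg simp: rho_nonneg)

lemma sum_rho_nonneg: "0 \<le> sum_list (map rho xs)"
  by (intro sum_list_nonneg) (auto simp: rho_nonneg)

lemma elem_le_sum: "x \<in> set xs \<Longrightarrow> rho x \<le> sum_list (map rho xs)"
  by (induction xs) (auto intro: add_increasing add_increasing2 rho_nonneg sum_rho_nonneg)

lemma max_real_le: "finite A \<Longrightarrow> A \<noteq> {} \<Longrightarrow> (\<forall>a\<in>A. real a \<le> B) \<Longrightarrow> real (Max A) \<le> B"
  using Max_in by blast

lemma hgt_bound: "real (hgt t) \<le> 2 * rho t"
proof (induction t)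
  case Empty then show ?case by simp
next
  case (Nd l ts)
  have "real (Max (insert 0 (set (map hgt ts)))) \<le> 2 * sum_list (map rho ts)"
  proof (rule max_real_le)
    show "\<forall>a\<in>insert 0 (set (map hgt ts)). real a \<le> 2 * sum_list (map rho ts)"
    proof
      fix a assume "a \<in> insert 0 (set (map hgt ts))"
      then show "real a \<le> 2 * sum_list (map rho ts)"
      proof
        assume "a = 0" then show ?thesis using sum_rho_nonneg[of ts] by simp
      next
        assume "a \<in> set (map hgt ts)"
        then obtain t where t: "t \<in> set ts" "a = hgt t" by auto
        have "real (hgt t) \<le> 2 * rho t" using Nd t(1) by blast
        then show ?thesis using elem_le_sum[OF t(1)] t(2) by simp
      qed
    qed
  qed auto
  then show ?case by simp
qed

lemma two_elems:
  assumes "x \<in> set ts" "y \<in> set (remove1 x ts)"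
  shows "rho x + rho y \<le> sum_list (map rho ts)"
  using sum_list_map_remove1[OF assms(1), of rho] elem_le_sum[OF assms(2)] by simp

lemma filt:
  assumes "x \<in> set ts" "P x" "2 \<le> length (filter P ts)"
  shows "\<exists>y \<in> set (remove1 x ts). P y"
proof -
  have "x \<in> set (filter P ts)" using assms by simp
  then have "length (filter P (remove1 x ts)) \<ge> 1" using assms(3)
    by (simp add: filter_remove1 length_remove1)
  then obtain y where "y \<in> set (filter P (remove1 x ts))"
    by (metis length_0_conv list.set_intros(1) neq_Nil_conv not_one_le_zero)
  then show ?thesis by auto
qed

lemma rr_bound: "wf m t \<Longrightarrow> 2 * real (rr t) \<le> 2 * rho t + 1"
proof (induction t rule: rr.induct)
  case 1 then show ?case by simp
next
  case (2 l) then show ?case by simp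
next
  case (3 l t)
  then show ?case using rho_nonneg[of t] by simp
next
  case (4 l v vb vc)
  let ?ts = "v # vb # vc"
  let ?M = "Max (insert 0 (set (map rr ?ts)))"
  have w: "\<forall>t\<in>set ?ts. t \<noteq> Empty \<and> wf m t" using 4(2) by simp
  have "?M \<in> insert 0 (set (map rr ?ts))" by (rule Max_in) auto
  then have "2 * real ?M \<le> 2 * sum_list (map rho ?ts)"
  proof
    assume "?M = 0"
    then show ?thesis using sum_rho_nonneg[of ?ts] by simp
  next
    assume "?M \<in> set (map rr ?ts)"
    then obtain x where x: "x \<in> set ?ts" "rr x = ?M" by (metis imageE set_map)
    have "length (remove1 x ?ts) \<ge> 1" using x(1) by (simp add: length_remove1)
    then have "remove1 x ?ts \<noteq> []" by auto
    then obtain y where y: "y \<in> set (remove1 x ?ts)"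
      using list.set_sel(1) by blast
    have yin: "y \<in> set ?ts" by (rule subsetD[OF set_remove1_subset y])
    have yne: "y \<noteq> Empty" using w yin by blast
    have "2 * real (rr x) \<le> 2 * rho x + 1" using 4(1) x(1) w by auto
    then have "2 * real (rr x) \<le> 2 * sum_list (map rho ?ts)"
      using two_elems[OF x(1) y] rho_pos[OF yne] by linarith
    then show ?thesis using x(2) by simp
  qed
  moreover have "rr (Nd l ?ts) = 1 + ?M" by (simp only: rr.simps)
  moreover have "rho (Nd l ?ts) \<ge> sum_list (map rho ?ts) + 1/2" by simp
  ultimately show ?case by simp
qed

lemma dd_bound: "wf m t \<Longrightarrow> 2 ^ dd t \<le> 2 * rho t + 1"
proof (induction t rule: dd.induct)
  case 1 then show ?case by simp
next
  case (2 l) then show ?case by simp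
next
  case (3 l v va)
  let ?ts = "v # va"
  let ?M = "Max (set (map dd ?ts))"
  have w: "\<forall>t\<in>set ?ts. t \<noteq> Empty \<and> wf m t" using 3(2-) by simp
  have IH: "\<And>t. t \<in> set ?ts \<Longrightarrow> (2::real) ^ dd t \<le> 2 * rho t + 1" using 3(1) w by blast
  have "?M \<in> set (map dd ?ts)" by (rule Max_in) auto
  then obtain x where x: "x \<in> set ?ts" "dd x = ?M" by (metis imageE set_map)
  have one: "(2::real) ^ ?M \<le> 2 * sum_list (map rho ?ts) + 1"
    using IH[OF x(1)] elem_le_sum[OF x(1)] x(2) by simp
  have two: "(2::real) ^ (?M + 1) \<le> 2 * sum_list (map rho ?ts) + 2"
    if h: "2 \<le> length (filter (\<lambda>y. y = ?M) (map dd ?ts))"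
  proof -
    have "filter (\<lambda>y. y = ?M) (map dd ?ts) = map dd (filter (\<lambda>t. dd t = ?M) ?ts)"
      by (simp add: filter_map comp_def)
    then have "2 \<le> length (filter (\<lambda>t. dd t = ?M) ?ts)" using h by simp
    then obtain y where y: "y \<in> set (remove1 x ?ts)" "dd y = ?M"
      using filt[of x ?ts "\<lambda>t. dd t = ?M"] x by blast
    have yin: "y \<in> set ?ts" by (rule subsetD[OF set_remove1_subset y(1)])
    have a: "(2::real) ^ ?M \<le> 2 * rho x + 1" using IH[OF x(1)] x(2) by simp
    have b: "(2::real) ^ ?M \<le> 2 * rho y + 1" using IH[OF yin] y(2) by simp
    have "(2::real) ^ ?M + 2 ^ ?M \<le> 2 * sum_list (map rho ?ts) + 2"
      using a b two_elems[OF x(1) y(1)] by linarith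
    then show ?thesis by simp
  qed
  have rw: "rho (Nd l ?ts) \<ge> sum_list (map rho ?ts) + 1/2" by simp
  show ?case
  proof (cases "2 \<le> length (filter (\<lambda>y. y = ?M) (map dd ?ts))")
    case True
    then have "dd (Nd l ?ts) = ?M + 1" by (simp only: dd.simps if_True)
    then show ?thesis using two[OF True] rw by simp
  next
    case False
    then have "dd (Nd l ?ts) = ?M" by (simp only: dd.simps if_False)
    then show ?thesis using one rw by simp
  qed
qed




lemma Gchar:
  assumes bnd: "\<And>t. wf m t \<Longrightarrow> rho t \<le> q \<Longrightarrow> g t \<le> v"
    and t0: "wf m t0" "t0 \<noteq> Empty" "rho t0 \<le> q" "g t0 = v"
  shows "Gmax g m q = v \<and> GmaxU g m q = v"
proof
  have S: "{g t | t. wf m t \<and> rho t \<le> q} \<subseteq> {..v}" using bnd by auto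
  show "Gmax g m q = v" unfolding Gmax_def
    by (rule Max_eqI[OF finite_subset[OF S]]) (use bnd t0 in auto)
  have T: "{gprime g ts | ts. inU m ts \<and> rhoU ts \<le> q} \<subseteq> {..v}"
  proof
    fix a assume "a \<in> {gprime g ts | ts. inU m ts \<and> rhoU ts \<le> q}"
    then obtain ts where ts: "a = gprime g ts" "inU m ts" "rhoU ts \<le> q" by auto
    have "a \<in> insert 0 (set (map g ts))" unfolding ts(1) gprime_def by (rule Max_in) auto
    then show "a \<in> {..v}"
    proof
      assume "a \<in> set (map g ts)"
      then obtain t where t: "t \<in> set ts" "a = g t" by auto
      have "rho t \<le> q" using elem_le_sum[OF t(1)] ts(3) unfolding rhoU_def by simp
      then show ?thesis using bnd t ts(2) unfolding inU_def by auto
    qed simp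
  qed
  have "gprime g [t0] = v" using t0 by (simp add: gprime_def)
  moreover have "inU m [t0] \<and> rhoU [t0] \<le> q" using t0 by (simp add: inU_def rhoU_def)
  ultimately show "GmaxU g m q = v" unfolding GmaxU_def
    by (intro Max_eqI[OF finite_subset[OF T]]) (use T in auto)
qed

fun chain :: "nat \<Rightarrow> ctree" where
  "chain 0 = Nd 1 []" | "chain (Suc n) = Nd 1 [chain n]"
fun comb :: "nat \<Rightarrow> ctree" where
  "comb 0 = Nd 1 []" | "comb (Suc n) = Nd 1 [comb n, Nd 1 []]"
fun fb :: "nat \<Rightarrow> ctree" where
  "fb 0 = Nd 1 []" | "fb (Suc n) = Nd 1 [fb n, fb n]"

lemma chain_props: "m \<ge> 1 \<Longrightarrow> wf m (chain n) \<and> chain n \<noteq> Empty \<and> hgt (chain n) = n + 1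
   \<and> rho (chain n) = (n + 1) / 2"
  by (induction n) (auto simp: field_simps)

lemma comb_props: "m \<ge> 1 \<Longrightarrow> wf m (comb n) \<and> comb n \<noteq> Empty \<and> rr (comb n) = n + 1
   \<and> rho (comb n) = n + 1/2"
  by (induction n) (auto simp: field_simps max_def)

lemma fb_props: "m \<ge> 1 \<Longrightarrow> wf m (fb n) \<and> fb n \<noteq> Empty \<and> dd (fb n) = n + 1
   \<and> rho (fb n) = (2 ^ (n+1) - 1) / 2"
  by (induction n) (auto simp: field_simps)

theorem mainTheorem7:
  fixes m k :: nat and q :: real
  assumes "m \<ge> 1" and "k \<ge> 1"
  defines "q \<equiv> real k / 2"
  shows "real (Gmax hgt m q) = 2 * q
    \<and> int (Gmax rr m q) = \<lfloor>q + 1/2\<rfloor>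
    \<and> int (Gmax dd m q) = \<lfloor>log 2 (q + 1/2)\<rfloor> + 1
    \<and> GmaxU hgt m q = Gmax hgt m q
    \<and> GmaxU rr m q = Gmax rr m q
    \<and> GmaxU dd m q = Gmax dd m q"
proof -
  have m: "1 \<le> m" by fact
  have H: "Gmax hgt m q = k \<and> GmaxU hgt m q = k"
  proof (rule Gchar)
    fix t assume "wf m t" "rho t \<le> q"
    then show "hgt t \<le> k" using hgt_bound[of t] unfolding q_def by simp
  next
    show "wf m (chain (k-1))" "chain (k-1) \<noteq> Empty" "rho (chain (k-1)) \<le> q"
      "hgt (chain (k-1)) = k" using chain_props[OF m, of "k-1"] assms(2)
      by (auto simp: q_def of_nat_diff)
  qed
  define v where "v = (k + 1) div 2"
  have v1: "v \<ge> 1" "2 * v \<le> k + 1" using assms(2) unfolding v_def by auto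
  have R: "Gmax rr m q = v \<and> GmaxU rr m q = v"
  proof (rule Gchar)
    fix t assume "wf m t" "rho t \<le> q"
    then have "2 * real (rr t) \<le> real k + 1" using rr_bound[of m t] unfolding q_def by simp
    then have "2 * rr t \<le> k + 1" by linarith
    then show "rr t \<le> v" unfolding v_def by simp
  next
    have "2 * real v \<le> real k + 1" using v1 by linarith
    then show "wf m (comb (v-1))" "comb (v-1) \<noteq> Empty" "rho (comb (v-1)) \<le> q"
      "rr (comb (v-1)) = v" using comb_props[OF m, of "v-1"] v1
      by (auto simp: q_def of_nat_diff)
  qed
  have Rf: "\<lfloor>q + 1/2\<rfloor> = int v"
  proof -
    have "q + 1/2 = real (k+1) / real 2" unfolding q_def by (simp add: field_simps)
    then show ?thesis unfolding v_def by (simp only: floor_divide_of_nat_eq)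
  qed
  define d where "d = nat \<lfloor>log 2 (real (k+1))\<rfloor>"
  have lg0: "log 2 (real (k+1)) \<ge> 0" by simp
  have "\<lfloor>log (real 2) (real (k+1))\<rfloor> = int d" unfolding d_def using lg0 by simp
  then have dp: "2^d \<le> k+1 \<and> k+1 < 2^(d+1)"
    using floor_log_nat_eq_powr_iff[of 2 "k+1" d] by simp
  have d1: "d \<ge> 1"
  proof (rule ccontr)
    assume "\<not> d \<ge> 1" then have "d = 0" by simp
    then show False using dp assms(2) by simp
  qed
  have D: "Gmax dd m q = d \<and> GmaxU dd m q = d"
  proof (rule Gchar)
    fix t assume "wf m t" "rho t \<le> q"
    then have "(2::real) ^ dd t \<le> real k + 1" using dd_bound[of m t] unfolding q_def by simp
    then have "real ((2::nat) ^ dd t) \<le> real (k + 1)" by simp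
    then have "(2::nat) ^ dd t \<le> k + 1" by (simp only: of_nat_le_iff)
    then have "(2::nat) ^ dd t < 2 ^ (d+1)" using dp by linarith
    then show "dd t \<le> d" using power_less_imp_less_exp[of "2::nat" "dd t" "d+1"] by simp
  next
    have "real (2^d) \<le> real k + 1" using dp by linarith
    then have "(2::real)^d \<le> real k + 1" by simp
    then show "wf m (fb (d-1))" "fb (d-1) \<noteq> Empty" "rho (fb (d-1)) \<le> q"
      "dd (fb (d-1)) = d" using fb_props[OF m, of "d-1"] d1
      by (auto simp: q_def)
  qed
  have Df: "\<lfloor>log 2 (q + 1/2)\<rfloor> + 1 = int d"
  proof -
    have "log 2 (q + 1/2) = log 2 (real (k+1)) - 1"
      unfolding q_def by (simp add: log_divide add_divide_distrib[symmetric] add.commute)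
    then have "\<lfloor>log 2 (q + 1/2)\<rfloor> = \<lfloor>log 2 (real (k+1))\<rfloor> - 1"
      by (metis floor_diff_one)
    then show ?thesis unfolding d_def using lg0 by simp
  qed
  show ?thesis using H R D Rf Df unfolding q_def by simp
qed

end
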